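(* Let $f(X)=X^n+a_{n-1}X^{n-1}+\dots+a_1X+a_0\in K[X]$, $n\geq 1$, be a monic regular polynomial. For each value $m$ that is the valuation of some root of $f$ in $\overline{K}$, let $f_m(X)=\prod (X-\zeta)$, the product taken (with multiplicity) over the roots $\zeta\in\overline{K}$ of $f$ with $v(\zeta)=m$, so that $f=\prod_m f_m$. Then every factor $f_m$ is a regular polynomial.
   Context: $K$ is a field complete with respect to a non-archimedean discrete valuation $v$ with $v(\pi)=1$ for a uniformizer $\pi$ of the valuation ring $A=\{x\in K: v(x)\geq 0\}$; the residue field $\kappa=A/\pi A$ is finite with $q$ elements and characteristic $p$; $v$ also denotes the unique extension of the valuation to an algebraic closure $\overline{K}$. It is known that each $f_m$ has coefficients in $K$. For $h=\sum_{i=0}^d c_iX^i$ (coefficients in $K$), the Newton polygon of $h$ is the convex hull of the points $(i,v(c_i))$ with $c_i\neq 0$. An edge of a polygon in $\mathbb{R}^2$ is a lower edge if it has an inner normal vector with positive second coordinate. $h$ is called regular if for every lower edge $S$ of its Newton polygon, with vertices $(s,v(c_s))$ and $(s',v(c_{s'}))$, $s>s'$: (1) $S$ contains exactly two points of the set $\{(i,v(c_i)) : 0\leq i\leq d,\ c_i\neq 0\}$; (2) $p\nmid (s-s')$. *)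

theory Defs
  imports "HOL-Analysis.Analysis" "HOL-Computational_Algebra.Polynomial" "HOL-Library.Extended_Real"
begin

text \<open>Ambient field 'a plays the role of the algebraic closure of K; K is a subset of it.
  Valuations take values in ereal with v x = \<infinity> iff x = 0.\<close>

definition is_subfield :: "'a::field set \<Rightarrow> bool" where
  "is_subfield K \<longleftrightarrow> 0 \<in> K \<and> 1 \<in> K \<and>
     (\<forall>x\<in>K. \<forall>y\<in>K. x + y \<in> K \<and> x - y \<in> K \<and> x * y \<in> K) \<and>
     (\<forall>x\<in>K. x \<noteq> 0 \<longrightarrow> inverse x \<in> K)"

definition nonarch_valuation :: "('a::field \<Rightarrow> ereal) \<Rightarrow> bool" where
  "nonarch_valuation v \<longleftrightarrow>
     (\<forall>x. v x = \<infinity> \<longleftrightarrow> x = 0) \<and>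
     (\<forall>x. v x \<noteq> -\<infinity>) \<and>
     (\<forall>x y. v (x * y) = v x + v y) \<and>
     (\<forall>x y. v (x + y) \<ge> min (v x) (v y))"

definition discrete_on_with_uniformizer :: "('a::field \<Rightarrow> ereal) \<Rightarrow> 'a set \<Rightarrow> 'a \<Rightarrow> bool" where
  "discrete_on_with_uniformizer v K \<pi> \<longleftrightarrow> \<pi> \<in> K \<and> v \<pi> = 1 \<and>
     (\<forall>x\<in>K. x \<noteq> 0 \<longrightarrow> (\<exists>k::int. v x = ereal (of_int k)))"

definition complete_wrt :: "('a::field \<Rightarrow> ereal) \<Rightarrow> 'a set \<Rightarrow> bool" where
  "complete_wrt v K \<longleftrightarrow>
     (\<forall>x::nat \<Rightarrow> 'a. (\<forall>n. x n \<in> K) \<and>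
        (\<forall>M::real. \<exists>N. \<forall>m\<ge>N. \<forall>n\<ge>N. v (x m - x n) \<ge> ereal M) \<longrightarrow>
        (\<exists>l\<in>K. \<forall>M::real. \<exists>N. \<forall>n\<ge>N. v (x n - l) \<ge> ereal M))"

definition val_ring :: "('a::field \<Rightarrow> ereal) \<Rightarrow> 'a set \<Rightarrow> 'a set" where
  "val_ring v K = {x \<in> K. v x \<ge> 0}"

definition residue_rel :: "('a::field \<Rightarrow> ereal) \<Rightarrow> 'a set \<Rightarrow> 'a \<Rightarrow> ('a \<times> 'a) set" where
  "residue_rel v K \<pi> = {(x, y). x \<in> val_ring v K \<and> y \<in> val_ring v K \<and>
      (\<exists>a\<in>val_ring v K. x - y = \<pi> * a)}"

definition residue_field :: "('a::field \<Rightarrow> ereal) \<Rightarrow> 'a set \<Rightarrow> 'a \<Rightarrow> 'a set set" where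
  "residue_field v K \<pi> = val_ring v K // residue_rel v K \<pi>"

definition algebraically_closed_field :: "'a::field itself \<Rightarrow> bool" where
  "algebraically_closed_field _ \<longleftrightarrow> (\<forall>f::'a poly. degree f \<ge> 1 \<longrightarrow> (\<exists>x. poly f x = 0))"

definition algebraic_over :: "'a::field set \<Rightarrow> bool" where
  "algebraic_over K \<longleftrightarrow> (\<forall>x::'a. \<exists>g. g \<noteq> 0 \<and> (\<forall>i. coeff g i \<in> K) \<and> poly g x = 0)"

definition np_point :: "('a::field \<Rightarrow> ereal) \<Rightarrow> 'a poly \<Rightarrow> nat \<Rightarrow> real \<times> real" where
  "np_point v h i = (real i, real_of_ereal (v (coeff h i)))"

definition np_points :: "('a::field \<Rightarrow> ereal) \<Rightarrow> 'a poly \<Rightarrow> (real \<times> real) set" where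
  "np_points v h = {np_point v h i | i. coeff h i \<noteq> 0}"

definition newton_polygon :: "('a::field \<Rightarrow> ereal) \<Rightarrow> 'a poly \<Rightarrow> (real \<times> real) set" where
  "newton_polygon v h = convex hull (np_points v h)"

definition lower_edge :: "('a::field \<Rightarrow> ereal) \<Rightarrow> 'a poly \<Rightarrow> (real \<times> real) set \<Rightarrow> bool" where
  "lower_edge v h S \<longleftrightarrow> S face_of newton_polygon v h \<and> aff_dim S = 1 \<and>
     (\<exists>u::real \<times> real. snd u > 0 \<and>
        S = {x \<in> newton_polygon v h. \<forall>y \<in> newton_polygon v h. inner u x \<le> inner u y})"

definition regular_poly :: "('a::field \<Rightarrow> ereal) \<Rightarrow> nat \<Rightarrow> 'a poly \<Rightarrow> bool" where
  "regular_poly v p h \<longleftrightarrow>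
     (\<forall>S. lower_edge v h S \<longrightarrow>
        card (S \<inter> np_points v h) = 2 \<and>
        (\<forall>s s'. s' < s \<and> coeff h s \<noteq> 0 \<and> coeff h s' \<noteq> 0 \<and>
           np_point v h s extreme_point_of S \<and> np_point v h s' extreme_point_of S \<longrightarrow>
           \<not> p dvd (s - s')))"

definition val_factor :: "('a::field \<Rightarrow> ereal) \<Rightarrow> 'a poly \<Rightarrow> ereal \<Rightarrow> 'a poly" where
  "val_factor v f m = (\<Prod>\<zeta>\<in>{\<zeta>. poly f \<zeta> = 0 \<and> v \<zeta> = m}. [:-\<zeta>, 1:] ^ order \<zeta> f)"

end

theory Submission
  imports Defs
begin


locale nav = fixes v :: "'a::field \<Rightarrow> ereal" assumes nav: "nonarch_valuation v"
begin

lemma v_inf_iff: "v x = \<infinity> \<longleftrightarrow> x = 0" using nav unfolding nonarch_valuation_def by blast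
lemma v_not_minf: "v x \<noteq> -\<infinity>" using nav unfolding nonarch_valuation_def by blast
lemma v_mult: "v (x * y) = v x + v y" using nav unfolding nonarch_valuation_def by blast
lemma v_add: "v (x + y) \<ge> min (v x) (v y)" using nav unfolding nonarch_valuation_def by blast
lemma v0[simp]: "v 0 = \<infinity>" using v_inf_iff by simp
lemma v_real: "x \<noteq> 0 \<Longrightarrow> v x = ereal (real_of_ereal (v x))"
  using v_inf_iff[of x] v_not_minf[of x] by (cases "v x") auto
lemma v1[simp]: "v 1 = 0"
proof -
  have "v 1 = v 1 + v 1" using v_mult[of 1 1] by simp
  moreover have "v 1 = ereal (real_of_ereal (v 1))" by (rule v_real) simp
  ultimately obtain r where "v 1 = ereal r" "ereal r = ereal r + ereal r" by metis
  then show ?thesis by (simp add: zero_ereal_def)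
qed
lemma v_neg[simp]: "v (-x) = v x"
proof -
  have a: "v (-1) + v (-1) = 0" using v_mult[of "-1" "-1"] by simp
  have "v (-1) = ereal (real_of_ereal (v (-1)))" by (rule v_real) simp
  then obtain r where "v (-1) = ereal r" by metis
  then have "v (-1) = 0" using a by (simp add: zero_ereal_def)
  then show ?thesis using v_mult[of "-1" x] by simp
qed
lemma v_sum_ge: "finite A \<Longrightarrow> (\<And>i. i \<in> A \<Longrightarrow> v (f i) \<ge> c) \<Longrightarrow> v (sum f A) \<ge> c"
proof (induction A rule: finite_induct)
  case empty then show ?case by simp
next
  case (insert a A)
  have "c \<le> v (f a)" "c \<le> v (sum f A)" using insert by auto
  then have "c \<le> min (v (f a)) (v (sum f A))" by simp
  also have "\<dots> \<le> v (f a + sum f A)" by (rule v_add)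
  finally show ?case using insert(1,2) by (simp add: sum.insert)
qed
lemma v_sum_gt: "finite A \<Longrightarrow> c < \<infinity> \<Longrightarrow> (\<And>i. i \<in> A \<Longrightarrow> v (f i) > c) \<Longrightarrow> v (sum f A) > c"
proof (induction A rule: finite_induct)
  case empty then show ?case by simp
next
  case (insert a A)
  have "c < v (f a)" "c < v (sum f A)" using insert by auto
  then have "c < min (v (f a)) (v (sum f A))" by simp
  also have "\<dots> \<le> v (f a + sum f A)" by (rule v_add)
  finally show ?case using insert(1,2) by (simp add: sum.insert)
qed
lemma v_add_eq: assumes "v y > v x" shows "v (x + y) = v x"
proof -
  have "min (v x) (v y) = v x" using assms by simp
  then have 1: "v (x + y) \<ge> v x" using v_add[of x y] by simp
  have "min (v (x+y)) (v (-y)) \<le> v (x + y + - y)" by (rule v_add)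
  then have 2: "min (v (x+y)) (v y) \<le> v x" by simp
  show ?thesis
  proof (rule ccontr)
    assume "v (x + y) \<noteq> v x"
    then have "v (x+y) > v x" using 1 by simp
    then have "min (v (x+y)) (v y) > v x" using assms by simp
    then show False using 2 by (simp add: not_le[symmetric])
  qed
qed


definition W :: "real \<Rightarrow> 'a poly \<Rightarrow> nat \<Rightarrow> ereal" where
  "W m h k = v (coeff h k) + ereal (m * real k)"

lemma ge_shift: "x + ereal r \<ge> ereal \<mu> \<longleftrightarrow> x \<ge> ereal (\<mu> - r)" by (cases x) auto
lemma gt_shift: "x + ereal r > ereal \<mu> \<longleftrightarrow> x > ereal (\<mu> - r)" by (cases x) auto
lemma eq_shift: "x + ereal r = ereal \<mu> \<longleftrightarrow> x = ereal (\<mu> - r)" by (cases x) auto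
lemma ge_ge: "a \<ge> ereal x \<Longrightarrow> b \<ge> ereal y \<Longrightarrow> a + b \<ge> ereal (x+y)" by (cases a; cases b) auto
lemma ge_gt: "a \<ge> ereal x \<Longrightarrow> b > ereal y \<Longrightarrow> a + b > ereal (x+y)" by (cases a; cases b) auto
lemma gt_ge: "a > ereal x \<Longrightarrow> b \<ge> ereal y \<Longrightarrow> a + b > ereal (x+y)" by (cases a; cases b) auto

lemma W_ge: "W m h k \<ge> ereal \<mu> \<longleftrightarrow> v (coeff h k) \<ge> ereal (\<mu> - m * real k)"
  unfolding W_def by (rule ge_shift)
lemma W_gt: "W m h k > ereal \<mu> \<longleftrightarrow> v (coeff h k) > ereal (\<mu> - m * real k)"
  unfolding W_def by (rule gt_shift)
lemma W_eq: "W m h k = ereal \<mu> \<longleftrightarrow> v (coeff h k) = ereal (\<mu> - m * real k)"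
  unfolding W_def by (rule eq_shift)

lemma prod_bound:
  assumes "\<And>j. W m h1 j \<ge> ereal \<mu>1" "\<And>l. W m h2 l \<ge> ereal \<mu>2"
  shows "W m (h1 * h2) i \<ge> ereal (\<mu>1 + \<mu>2)"
proof -
  have "v (coeff (h1*h2) i) \<ge> ereal (\<mu>1 + \<mu>2 - m * real i)"
    unfolding coeff_mult
  proof (rule v_sum_ge)
    fix j assume j: "j \<in> {..i}"
    have a: "v (coeff h1 j) \<ge> ereal (\<mu>1 - m * real j)" using assms(1)[of j] W_ge by blast
    have b: "v (coeff h2 (i-j)) \<ge> ereal (\<mu>2 - m * real (i-j))" using assms(2)[of "i-j"] W_ge by blast
    have "(\<mu>1 - m * real j) + (\<mu>2 - m * real (i-j)) = \<mu>1 + \<mu>2 - m * real i"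
      using j by (simp add: of_nat_diff algebra_simps)
    then show "v (coeff h1 j * coeff h2 (i-j)) \<ge> ereal (\<mu>1 + \<mu>2 - m * real i)"
      using ge_ge[OF a b] by (simp only: v_mult)
  qed simp
  then show ?thesis using W_ge by blast
qed

lemma prod_unique:
  assumes "\<And>j. W m h1 j \<ge> ereal \<mu>1" "\<And>l. W m h2 l \<ge> ereal \<mu>2"
    and "\<And>l. l \<noteq> k2 \<Longrightarrow> W m h2 l > ereal \<mu>2" "W m h2 k2 = ereal \<mu>2"
  shows "W m (h1 * h2) i = ereal (\<mu>1 + \<mu>2) \<longleftrightarrow> k2 \<le> i \<and> W m h1 (i - k2) = ereal \<mu>1"
proof -
  define c where "c = \<mu>1 + \<mu>2 - m * real i"
  define T where "T j = coeff h1 j * coeff h2 (i-j)" for j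
  have cs: "coeff (h1*h2) i = sum T {..i}" unfolding coeff_mult T_def by simp
  have gt: "v (T j) > ereal c" if j: "j \<le> i" "i - j \<noteq> k2" for j
  proof -
    have a: "v (coeff h1 j) \<ge> ereal (\<mu>1 - m * real j)" using assms(1)[of j] W_ge by blast
    have b: "v (coeff h2 (i-j)) > ereal (\<mu>2 - m * real (i-j))" using assms(3)[OF j(2)] W_gt by blast
    have "(\<mu>1 - m * real j) + (\<mu>2 - m * real (i-j)) = c"
      using j unfolding c_def by (simp add: of_nat_diff algebra_simps)
    then show ?thesis using ge_gt[OF a b] by (simp only: v_mult T_def)
  qed
  show ?thesis
  proof (cases "k2 \<le> i \<and> W m h1 (i - k2) = ereal \<mu>1")
    case True
    define j0 where "j0 = i - k2"
    have j0: "j0 \<in> {..i}" unfolding j0_def by simp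
    have "sum T {..i} = T j0 + sum T ({..i} - {j0})" using j0 by (simp add: sum.remove)
    moreover have "v (T j0) = ereal c"
    proof -
      have a: "v (coeff h1 j0) = ereal (\<mu>1 - m * real j0)" using True W_eq unfolding j0_def by blast
      have b: "v (coeff h2 (i-j0)) = ereal (\<mu>2 - m * real (i-j0))" using assms(4) W_eq True unfolding j0_def
        by (metis diff_diff_cancel)
      have "(\<mu>1 - m * real j0) + (\<mu>2 - m * real (i-j0)) = c"
        using j0 unfolding c_def by (simp add: of_nat_diff algebra_simps)
      then show ?thesis using a b by (simp only: v_mult T_def plus_ereal.simps)
    qed
    moreover have "v (sum T ({..i} - {j0})) > ereal c"
    proof (rule v_sum_gt)
      fix j assume "j \<in> {..i} - {j0}"
      then have "j \<le> i" "i - j \<noteq> k2" using True unfolding j0_def by auto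
      then show "v (T j) > ereal c" by (rule gt)
    qed auto
    ultimately have "v (coeff (h1*h2) i) = ereal c" using cs v_add_eq by simp
    then show ?thesis using True W_eq unfolding c_def by blast
  next
    case False
    have "v (sum T {..i}) > ereal c"
    proof (rule v_sum_gt)
      fix j assume j: "j \<in> {..i}"
      show "v (T j) > ereal c"
      proof (cases "i - j = k2")
        case False then show ?thesis using gt j by simp
      next
        case True
        then have "k2 \<le> i" "j = i - k2" using j by auto
        then have "W m h1 j \<noteq> ereal \<mu>1" using \<open>\<not> (k2 \<le> i \<and> W m h1 (i - k2) = ereal \<mu>1)\<close> by simp
        then have "W m h1 j > ereal \<mu>1" using assms(1)[of j] by simp
        then have a: "v (coeff h1 j) > ereal (\<mu>1 - m * real j)" using W_gt by blast
        have b: "v (coeff h2 (i-j)) \<ge> ereal (\<mu>2 - m * real (i-j))" using assms(2)[of "i-j"] W_ge by blast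
        have "(\<mu>1 - m * real j) + (\<mu>2 - m * real (i-j)) = c"
          using j unfolding c_def by (simp add: of_nat_diff algebra_simps)
        then show ?thesis using gt_ge[OF a b] by (simp only: v_mult T_def)
      qed
    qed auto
    then have "W m (h1*h2) i > ereal (\<mu>1 + \<mu>2)" using cs W_gt unfolding c_def by simp
    then show ?thesis using False by auto
  qed
qed

lemma W_lin: "W m [:-z, 1:] k = (if k = 0 then v z else if k = 1 then ereal m else \<infinity>)"
  unfolding W_def by (cases k) (auto simp: coeff_pCons split: nat.splits)

definition umin :: "real \<Rightarrow> 'a poly \<Rightarrow> nat \<Rightarrow> real \<Rightarrow> bool" where
  "umin m h k \<mu> \<longleftrightarrow> (\<forall>l. W m h l \<ge> ereal \<mu>) \<and> (\<forall>l. l \<noteq> k \<longrightarrow> W m h l > ereal \<mu>) \<and> W m h k = ereal \<mu>"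

lemma umin_lin: assumes "v z \<noteq> ereal m" shows "\<exists>k \<mu>. umin m [:-z, 1:] k \<mu>"
proof (cases "v z > ereal m")
  case True
  then have "umin m [:-z, 1:] 1 m" unfolding umin_def W_lin by auto
  then show ?thesis by blast
next
  case False
  then have lt: "v z < ereal m" using assms by auto
  then obtain r where r: "v z = ereal r" using v_not_minf[of z] by (cases "v z") auto
  then have "umin m [:-z, 1:] 0 r" using lt unfolding umin_def W_lin by auto
  then show ?thesis by blast
qed

lemma umin_mult: assumes "umin m h1 k1 \<mu>1" "umin m h2 k2 \<mu>2" shows "umin m (h1*h2) (k1+k2) (\<mu>1+\<mu>2)"
proof -
  have A: "\<And>j. W m h1 j \<ge> ereal \<mu>1" "\<And>l. W m h2 l \<ge> ereal \<mu>2"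
    "\<And>l. l \<noteq> k2 \<Longrightarrow> W m h2 l > ereal \<mu>2" "W m h2 k2 = ereal \<mu>2"
    using assms unfolding umin_def by auto
  have B: "W m h1 j = ereal \<mu>1 \<longleftrightarrow> j = k1" for j using assms(1) unfolding umin_def by force
  have ge: "W m (h1*h2) i \<ge> ereal (\<mu>1+\<mu>2)" for i by (rule prod_bound[OF A(1,2)])
  have eq: "W m (h1*h2) i = ereal (\<mu>1+\<mu>2) \<longleftrightarrow> i = k1 + k2" for i
    using prod_unique[OF A, of i] B[of "i - k2"] by auto
  show ?thesis unfolding umin_def using ge eq by (metis order_le_imp_less_or_eq)
qed

lemma umin_const: assumes "c \<noteq> 0" shows "\<exists>\<mu>. umin m [:c:] 0 \<mu>"
proof -
  have "umin m [:c:] 0 (real_of_ereal (v c))"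
    unfolding umin_def W_def using v_real[OF assms] by (auto simp: coeff_pCons split: nat.splits)
  then show ?thesis by blast
qed

lemma umin_exists:
  assumes ac: "algebraically_closed_field TYPE('a)"
  shows "g \<noteq> 0 \<Longrightarrow> (\<And>z. poly g z = 0 \<Longrightarrow> v z \<noteq> ereal m) \<Longrightarrow> \<exists>k \<mu>. umin m g k \<mu>"
proof (induction "degree g" arbitrary: g rule: less_induct)
  case less
  show ?case
  proof (cases "degree g = 0")
    case True
    then obtain c where "g = [:c:]" by (metis degree_eq_zeroE)
    then show ?thesis using umin_const[of c m] less.prems(1) by auto
  next
    case False
    then obtain z where z: "poly g z = 0" using ac unfolding algebraically_closed_field_def by (metis less_one not_le)
    then obtain g' where g': "g = [:-z, 1:] * g'" using poly_eq_0_iff_dvd by (metis dvdE)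
    have "g' \<noteq> 0" using g' less.prems(1) by auto
    have "degree g = degree [:-z, 1:] + degree g'" using g' \<open>g' \<noteq> 0\<close> by (metis degree_mult_eq pCons_eq_0_iff zero_neq_one)
    then have "degree g' < degree g" by simp
    moreover have "\<And>y. poly g' y = 0 \<Longrightarrow> v y \<noteq> ereal m" using less.prems(2) g' by auto
    ultimately obtain k \<mu> where 1: "umin m g' k \<mu>" using less.hyps \<open>g' \<noteq> 0\<close> by blast
    obtain k1 \<mu>1 where 2: "umin m [:-z, 1:] k1 \<mu>1" using umin_lin less.prems(2)[OF z] by blast
    show ?thesis using umin_mult[OF 2 1] g' by blast
  qed
qed

definition Qm :: "real \<Rightarrow> 'a poly \<Rightarrow> bool" where
  "Qm m h \<longleftrightarrow> lead_coeff h = 1 \<and> (\<forall>k. W m h k \<ge> ereal (m * degree h)) \<and> W m h 0 = ereal (m * degree h)"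

lemma Qm_one: "Qm m 1"
  unfolding Qm_def W_def by (auto simp: coeff_1)

lemma Qm_lin: "v z = ereal m \<Longrightarrow> Qm m [:-z, 1:]"
  unfolding Qm_def by (auto simp: W_lin)

lemma Qm_mult: assumes "Qm m h1" "Qm m h2" shows "Qm m (h1*h2)"
proof -
  have nz: "h1 \<noteq> 0" "h2 \<noteq> 0" using assms unfolding Qm_def by auto
  have deg: "degree (h1*h2) = degree h1 + degree h2" using nz by (simp add: degree_mult_eq)
  have l: "lead_coeff (h1*h2) = 1" using assms unfolding Qm_def by (simp add: lead_coeff_mult)
  have "W m (h1*h2) k \<ge> ereal (m * degree h1 + m * degree h2)" for k
    by (rule prod_bound) (use assms in \<open>auto simp: Qm_def\<close>)
  then have b: "W m (h1*h2) k \<ge> ereal (m * degree (h1*h2))" for k unfolding deg by (simp add: algebra_simps)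
  have "W m (h1*h2) 0 = v (coeff h1 0) + v (coeff h2 0)" unfolding W_def by (simp add: v_mult coeff_mult)
  also have "\<dots> = ereal (m * degree h1) + ereal (m * degree h2)" using assms unfolding Qm_def W_def by simp
  finally have "W m (h1*h2) 0 = ereal (m * degree (h1*h2))" unfolding deg by (simp add: algebra_simps)
  then show ?thesis using l b unfolding Qm_def by simp
qed

lemma Qm_power: "Qm m h \<Longrightarrow> Qm m (h ^ n)"
  by (induction n) (auto simp: Qm_one Qm_mult)

lemma Qm_prod: "finite A \<Longrightarrow> (\<And>x. x \<in> A \<Longrightarrow> Qm m (F x)) \<Longrightarrow> Qm m (prod F A)"
  by (induction A rule: finite_induct) (auto simp: Qm_one Qm_mult)
end


lemma hull_ge:
  fixes P :: "(real \<times> real) set"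
  assumes "\<And>p. p \<in> P \<Longrightarrow> inner u p \<ge> c" "x \<in> convex hull P"
  shows "inner u x \<ge> c"
proof -
  have "convex hull P \<subseteq> {x. inner u x \<ge> c}"
    by (rule hull_minimal) (use assms(1) convex_halfspace_ge in auto)
  then show ?thesis using assms(2) by auto
qed

lemma hull_argmin:
  fixes P :: "(real \<times> real) set"
  assumes "finite P"
  shows "(\<And>p. p \<in> P \<Longrightarrow> inner u p \<ge> c) \<Longrightarrow> x \<in> convex hull P \<Longrightarrow> inner u x = c
     \<Longrightarrow> x \<in> convex hull {p\<in>P. inner u p = c}"
  using assms
proof (induction P arbitrary: x rule: finite_induct)
  case empty then show ?case by simp
next
  case (insert a Q)
  show ?case
  proof (cases "Q = {}")
    case True
    then have "x = a" using insert.prems by simp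
    then show ?thesis using insert.prems True by (simp add: hull_inc)
  next
    case False
    obtain \<alpha> \<beta> b where ab: "\<alpha> \<ge> 0" "\<beta> \<ge> 0" "\<alpha> + \<beta> = 1" "b \<in> convex hull Q" "x = \<alpha> *\<^sub>R a + \<beta> *\<^sub>R b"
      using insert.prems(2) convex_hull_insert[OF False] by blast
    have ua: "inner u a \<ge> c" using insert.prems(1) by simp
    have ub: "inner u b \<ge> c" using hull_ge[where P=Q and u=u and c=c and x=b, OF _ ab(4)] insert.prems(1) by auto
    have ux: "\<alpha> * inner u a + \<beta> * inner u b = c" using insert.prems(3) ab(5) by (simp add: inner_add_right)
    have t1: "\<alpha> * (inner u a - c) \<ge> 0" "\<beta> * (inner u b - c) \<ge> 0" using ua ub ab by auto
    have s: "\<alpha> * (inner u a - c) + \<beta> * (inner u b - c) = 0" using ux ab(3)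
      by (simp add: algebra_simps) (metis distrib_right mult_1 add.commute)
    then have z: "\<alpha> * (inner u a - c) = 0" "\<beta> * (inner u b - c) = 0" using t1 by linarith+
    have sub: "convex hull {p\<in>Q. inner u p = c} \<subseteq> convex hull {p\<in>insert a Q. inner u p = c}"
      by (rule hull_mono) auto
    show ?thesis
    proof (cases "\<alpha> = 0")
      case True
      then have "x = b" "inner u b = c" using ab insert.prems(3) by auto
      then show ?thesis using insert.IH[of b] insert.prems(1) ab(4) sub by auto
    next
      case an: False
      then have uac: "inner u a = c" using z by simp
      show ?thesis
      proof (cases "\<beta> = 0")
        case True
        then have "x = a" using ab by simp
        then show ?thesis using uac by (simp add: hull_inc)
      next
        case False
        then have "inner u b = c" using z by simp
        then have "b \<in> convex hull {p\<in>insert a Q. inner u p = c}"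
          using insert.IH[of b] insert.prems(1) ab(4) sub by auto
        moreover have "a \<in> convex hull {p\<in>insert a Q. inner u p = c}" using uac by (simp add: hull_inc)
        ultimately show ?thesis using ab convex_convex_hull unfolding convex_def by blast
      qed
    qed
  qed
qed

lemma face_unique:
  fixes P :: "(real \<times> real) set"
  assumes "finite P" "p0 \<in> P" "\<And>p. p \<in> P \<Longrightarrow> p \<noteq> p0 \<Longrightarrow> inner u p > inner u p0"
    and "x \<in> convex hull P" "\<forall>y \<in> convex hull P. inner u x \<le> inner u y"
  shows "x = p0"
proof -
  have ge: "\<And>p. p \<in> P \<Longrightarrow> inner u p \<ge> inner u p0" using assms(3) by (metis less_eq_real_def)
  have "inner u x \<le> inner u p0" using assms(5) assms(2) by (simp add: hull_inc)
  moreover have "inner u x \<ge> inner u p0" using hull_ge[OF ge assms(4)] .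
  ultimately have "inner u x = inner u p0" by simp
  from hull_argmin[OF assms(1) ge assms(4) this]
  have "x \<in> convex hull {p\<in>P. inner u p = inner u p0}" .
  moreover have "{p\<in>P. inner u p = inner u p0} = {p0}" using assms(2,3) by force
  ultimately show ?thesis by simp
qed

lemma extreme_fst:
  fixes S :: "(real \<times> real) set"
  assumes "x \<in> S" "(\<forall>y\<in>S. fst y \<ge> fst x) \<or> (\<forall>y\<in>S. fst y \<le> fst x)"
    and "\<And>y z. y \<in> S \<Longrightarrow> z \<in> S \<Longrightarrow> fst y = fst z \<Longrightarrow> y = z"
  shows "x extreme_point_of S"
  unfolding extreme_point_of_def
proof (intro conjI ballI notI)
  show "x \<in> S" by fact
  fix a b assume ab: "a \<in> S" "b \<in> S" "x \<in> open_segment a b"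
  then obtain t where t: "a \<noteq> b" "0 < t" "t < 1" "x = (1 - t) *\<^sub>R a + t *\<^sub>R b"
    unfolding in_segment by blast
  have fx: "fst x = (1 - t) * fst a + t * fst b" using t(4) by simp
  have "fst a = fst x \<and> fst b = fst x"
  proof (cases "\<forall>y\<in>S. fst y \<ge> fst x")
    case True
    then have "fst a - fst x \<ge> 0" "fst b - fst x \<ge> 0" using ab by auto
    then have "(1-t) * (fst a - fst x) \<ge> 0" "t * (fst b - fst x) \<ge> 0" using t by auto
    moreover have "(1-t) * (fst a - fst x) + t * (fst b - fst x) = 0" using fx by (simp add: algebra_simps)
    ultimately have "(1-t) * (fst a - fst x) = 0" "t * (fst b - fst x) = 0" by linarith+
    then show ?thesis using t by auto
  next
    case False
    then have "\<forall>y\<in>S. fst y \<le> fst x" using assms(2) by blast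
    then have "fst x - fst a \<ge> 0" "fst x - fst b \<ge> 0" using ab by auto
    then have "(1-t) * (fst x - fst a) \<ge> 0" "t * (fst x - fst b) \<ge> 0" using t by auto
    moreover have "(1-t) * (fst x - fst a) + t * (fst x - fst b) = 0" using fx by (simp add: algebra_simps)
    ultimately have "(1-t) * (fst x - fst a) = 0" "t * (fst x - fst b) = 0" by linarith+
    then show ?thesis using t by auto
  qed
  then have "a = b" using assms(3) ab by metis
  then show False using t by simp
qed



lemma prod_lin_dvd:
  fixes f :: "'a::field poly"
  assumes "f \<noteq> 0"
  shows "finite B \<Longrightarrow> (\<Prod>z\<in>B. [:-z, 1:] ^ order z f) dvd f"
proof (induction B rule: finite_induct)
  case empty then show ?case by simp
next
  case (insert a B)
  define P where "P = (\<Prod>z\<in>B. [:-z, 1:] ^ order z f)"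
  obtain r where r: "f = P * r" using insert.IH unfolding P_def by (metis dvdE)
  have "poly P a \<noteq> 0" unfolding P_def using insert.hyps by (auto simp: poly_prod prod_zero_iff)
  then have "order a P = 0" by (rule order_0I)
  moreover have "order a f = order a P + order a r" using r assms by (metis order_mult)
  ultimately have "order a r = order a f" by simp
  then have "[:-a, 1:] ^ order a f dvd r" by (metis order_1)
  then have "[:-a, 1:] ^ order a f * P dvd P * r" by (simp add: mult.commute mult_dvd_mono)
  then show ?case using insert.hyps r unfolding P_def by (simp add: prod.insert)
qed

lemma cofactor_roots:
  fixes f :: "'a::field poly"
  assumes "f \<noteq> 0" "finite B" "f = (\<Prod>z\<in>B. [:-z, 1:] ^ order z f) * g" "poly f z = 0" "z \<in> B"
  shows "poly g z \<noteq> 0"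
proof
  assume gz: "poly g z = 0"
  define P where "P = (\<Prod>z\<in>B. [:-z, 1:] ^ order z f)"
  have "[:-z, 1:] ^ order z f dvd P" unfolding P_def using assms(2,5) by (rule dvd_prodI)
  then have "order z f \<le> order z P" using assms(1,3) unfolding P_def[symmetric] by (auto simp: order_divides)
  moreover have "order z f = order z P + order z g" using assms(1,3) unfolding P_def[symmetric] by (metis order_mult)
  moreover have "g \<noteq> 0" using assms(1,3) by auto
  then have "order z g > 0" using gz by (simp add: order_gt_0_iff)
  ultimately show False by simp
qed



context nav begin

lemma inner_np: "inner (a, b) (np_point v h j) = a * real j + b * real_of_ereal (v (coeff h j))"
  unfolding np_point_def by (simp add: inner_prod_def)

lemma W_np: "coeff h j \<noteq> 0 \<Longrightarrow> W m h j = ereal (inner (m, 1) (np_point v h j))"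
  unfolding W_def inner_np using v_real[of "coeff h j"]
  by (metis mult_1 plus_ereal.simps(1) add.commute)

lemma W_fin_nz: "W m h j = ereal r \<Longrightarrow> coeff h j \<noteq> 0"
  unfolding W_def by auto

lemma np_points_finite: "finite (np_points v h)"
proof -
  have "np_points v h \<subseteq> np_point v h ` {..degree h}"
    unfolding np_points_def using le_degree by fastforce
  then show ?thesis by (rule finite_subset) simp
qed

lemma np_point_inj: "np_point v h i = np_point v h j \<Longrightarrow> i = j"
  unfolding np_point_def by simp

lemma edgeF:
  assumes reg: "regular_poly v p f"
    and ge: "\<And>i. W m f i \<ge> ereal \<mu>"
    and E1: "W m f k0 = ereal \<mu>" "W m f (k0+d) = ereal \<mu>"
    and E2: "\<And>i. W m f i = ereal \<mu> \<Longrightarrow> k0 \<le> i \<and> i \<le> k0 + d"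
    and d: "d \<ge> 1"
  shows "{i. W m f i = ereal \<mu>} = {k0, k0+d} \<and> \<not> p dvd d"
proof -
  define E where "E = {i. W m f i = ereal \<mu>}"
  define P where "P = np_points v f"
  define H where "H = convex hull P"
  define w where "w = (m, 1::real)"
  have finP: "finite P" unfolding P_def by (rule np_points_finite)
  have Pchar: "x \<in> P \<longleftrightarrow> (\<exists>i. x = np_point v f i \<and> coeff f i \<noteq> 0)" for x
    unfolding P_def np_points_def by auto
  have Wi: "coeff f i \<noteq> 0 \<Longrightarrow> W m f i = ereal (inner w (np_point v f i))" for i
    unfolding w_def by (rule W_np)
  have inP: "inner w x \<ge> \<mu>" if xP: "x \<in> P" for x
  proof -
    obtain i where i: "x = np_point v f i" "coeff f i \<noteq> 0" using Pchar[THEN iffD1, OF xP] by blast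
    have "ereal \<mu> \<le> ereal (inner w (np_point v f i))" using ge[of i] unfolding Wi[OF i(2)] .
    then show ?thesis using i(1) by simp
  qed
  have innerE: "coeff f i \<noteq> 0 \<Longrightarrow> (inner w (np_point v f i) = \<mu> \<longleftrightarrow> i \<in> E)" for i
  proof -
    assume "coeff f i \<noteq> 0"
    then have "W m f i = ereal (inner w (np_point v f i))" by (rule Wi)
    then show ?thesis unfolding E_def by simp
  qed
  have Enz: "i \<in> E \<Longrightarrow> coeff f i \<noteq> 0" for i unfolding E_def using W_fin_nz by blast
  have inH: "inner w x \<ge> \<mu>" if "x \<in> H" for x
    by (rule hull_ge[where P=P]) (use inP that in \<open>auto simp: H_def\<close>)
  define A where "A = np_point v f k0"
  define B where "B = np_point v f (k0+d)"
  have kE: "k0 \<in> E" "k0 + d \<in> E" using E1 unfolding E_def by auto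
  have nzA: "coeff f k0 \<noteq> 0" "coeff f (k0+d) \<noteq> 0" using kE Enz by auto
  have AP: "A \<in> P" "inner w A = \<mu>" unfolding A_def
    using Pchar[of "np_point v f k0"] nzA(1) apply blast using innerE[OF nzA(1)] kE(1) by simp
  have BP: "B \<in> P" "inner w B = \<mu>" unfolding B_def
    using Pchar[of "np_point v f (k0+d)"] nzA(2) apply blast using innerE[OF nzA(2)] kE(2) by simp
  define S where "S = {x \<in> H. \<forall>y \<in> H. inner w x \<le> inner w y}"
  have Seq: "S = H \<inter> {x. inner w x = \<mu>}"
  proof -
    have "A \<in> H" using AP unfolding H_def by (simp add: hull_inc)
    show ?thesis
    proof (intro set_eqI iffI)
      fix x assume "x \<in> S"
      then have "x \<in> H" "inner w x \<le> inner w A" using \<open>A \<in> H\<close> unfolding S_def by auto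
      then show "x \<in> H \<inter> {x. inner w x = \<mu>}" using inH[of x] AP(2) by simp
    next
      fix x assume "x \<in> H \<inter> {x. inner w x = \<mu>}"
      then show "x \<in> S" unfolding S_def using inH by auto
    qed
  qed
  have face: "S face_of H" unfolding Seq H_def
    by (rule face_of_Int_supporting_hyperplane_ge) (auto intro: inH simp: H_def)
  have AB: "A \<noteq> B" unfolding A_def B_def using d np_point_inj by fastforce
  have ABS: "A \<in> S" "B \<in> S" unfolding Seq H_def using AP BP by (auto simp: hull_inc)
  have "aff_dim {A, B} \<le> aff_dim S" using ABS by (intro aff_dim_subset) auto
  then have a1: "aff_dim S \<ge> 1" using AB by simp
  have "w \<noteq> 0" unfolding w_def by (simp add: zero_prod_def)
  have "aff_dim S \<le> aff_dim {x. inner w x = \<mu>}" unfolding Seq by (intro aff_dim_subset) auto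
  also have "\<dots> = 1" using \<open>w \<noteq> 0\<close> by simp
  finally have "aff_dim S = 1" using a1 by simp
  note aff1 = this
  have NPH: "newton_polygon v f = H" unfolding newton_polygon_def H_def P_def ..
  have le: "lower_edge v f S" unfolding lower_edge_def NPH
  proof (intro conjI exI[of _ w])
    show "S face_of H" by (rule face)
    show "aff_dim S = 1" by (rule aff1)
    show "0 < snd w" by (simp add: w_def)
    show "S = {x \<in> H. \<forall>y\<in>H. inner w x \<le> inner w y}" by (simp add: S_def)
  qed
  note regS = reg[unfolded regular_poly_def, THEN spec[of _ S], THEN mp, OF le]
  have card2: "card (S \<inter> P) = 2" using conjunct1[OF regS] unfolding P_def .
  have SP: "S \<inter> P = np_point v f ` E"
  proof
    show "S \<inter> P \<subseteq> np_point v f ` E"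
    proof
      fix x assume x: "x \<in> S \<inter> P"
      then have "x \<in> P" by simp
      then obtain i where i: "x = np_point v f i" "coeff f i \<noteq> 0" using Pchar[of x] by blast
      moreover have "inner w x = \<mu>" using x unfolding Seq by simp
      ultimately have "i \<in> E" using innerE[of i] by simp
      then show "x \<in> np_point v f ` E" using i by auto
    qed
  next
    show "np_point v f ` E \<subseteq> S \<inter> P"
    proof
      fix x assume "x \<in> np_point v f ` E"
      then obtain i where i: "i \<in> E" "x = np_point v f i" by auto
      have nz: "coeff f i \<noteq> 0" using i(1) by (rule Enz)
      have "x \<in> P" using i nz Pchar[of x] by blast
      moreover have "inner w x = \<mu>" using i innerE[OF nz] by simp
      ultimately show "x \<in> S \<inter> P" unfolding Seq H_def by (auto simp: hull_inc)
    qed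
  qed
  have "E \<subseteq> {k0..k0+d}" using E2 unfolding E_def by auto
  then have finE: "finite E" by (rule finite_subset) simp
  have "inj_on (np_point v f) E" using np_point_inj by (auto simp: inj_on_def)
  then have "card (np_point v f ` E) = card E" by (rule card_image)
  then have cE: "card E = 2" using card2 SP by simp
  moreover have "card {k0, k0+d} = 2" using d by simp
  moreover have "{k0, k0+d} \<subseteq> E" using kE by simp
  ultimately have Eeq: "E = {k0, k0+d}" using card_subset_eq[OF finE, of "{k0, k0+d}"] by simp
  have Sfst: "real k0 \<le> fst x \<and> fst x \<le> real (k0 + d)" if "x \<in> S" for x
  proof -
    have xH: "x \<in> convex hull P" "inner w x = \<mu>" using that unfolding Seq H_def by auto
    have "x \<in> convex hull {p\<in>P. inner w p = \<mu>}" by (rule hull_argmin[OF finP inP xH])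
    moreover have "{p\<in>P. inner w p = \<mu>} \<subseteq> {x. inner (1::real,0::real) x \<ge> real k0} \<inter> {x. inner (1::real,0::real) x \<le> real (k0+d)}"
    proof
      fix p assume "p \<in> {p\<in>P. inner w p = \<mu>}"
      then have "p \<in> P" "inner w p = \<mu>" by auto
      then obtain i where i: "p = np_point v f i" "coeff f i \<noteq> 0" "inner w p = \<mu>" using Pchar[of p] by blast
      then have "i \<in> E" using innerE by blast
      then have "k0 \<le> i" "i \<le> k0+d" using E2 unfolding E_def by auto
      then show "p \<in> {x. inner (1::real,0::real) x \<ge> real k0} \<inter> {x. inner (1::real,0::real) x \<le> real (k0+d)}"
        using i(1) by (simp add: inner_np)
    qed
    then have "convex hull {p\<in>P. inner w p = \<mu>} \<subseteq> {x. inner (1::real,0::real) x \<ge> real k0} \<inter> {x. inner (1::real,0::real) x \<le> real (k0+d)}"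
      by (intro hull_minimal convex_Int convex_halfspace_ge convex_halfspace_le)
    ultimately show ?thesis by (auto simp: inner_prod_def)
  qed
  have Sinj: "y = z" if "y \<in> S" "z \<in> S" "fst y = fst z" for y z
  proof -
    have "inner w y = \<mu>" "inner w z = \<mu>" using that unfolding Seq by auto
    then have "snd y = snd z" using that(3) unfolding w_def by (simp add: inner_prod_def)
    then show ?thesis using that(3) by (simp add: prod_eq_iff)
  qed
  have fA: "fst A = real k0" "fst B = real (k0+d)" unfolding A_def B_def np_point_def by simp_all
  have exA: "A extreme_point_of S" using ABS Sfst fA by (intro extreme_fst Sinj) auto
  have exB: "B extreme_point_of S" using ABS Sfst fA by (intro extreme_fst Sinj) auto
  have "coeff f k0 \<noteq> 0" "coeff f (k0+d) \<noteq> 0" using kE Enz by auto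
  moreover have "k0 < k0 + d" using d by simp
  ultimately have "\<not> p dvd (k0 + d - k0)" using conjunct2[OF regS, rule_format, of k0 "k0+d"] exA exB
    unfolding A_def B_def by blast
  then show ?thesis using Eeq unfolding E_def by simp
qed

end


lemma aff_dim_sub_sing: "S \<subseteq> {a::real\<times>real} \<Longrightarrow> aff_dim S \<noteq> 1"
  using aff_dim_subset[of S "{a}"] by simp

context nav begin

lemma regH:
  assumes Q: "Qm m h" and d1: "degree h \<ge> 1"
    and J: "\<And>j. W m h j = ereal (m * degree h) \<Longrightarrow> j = 0 \<or> j = degree h"
    and pd: "\<not> p dvd degree h"
  shows "regular_poly v p h"
  unfolding regular_poly_def
proof (intro allI impI)
  fix S assume le: "lower_edge v h S"
  define d where "d = degree h"
  define P where "P = np_points v h"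
  define H where "H = convex hull P"
  define y where "y j = real_of_ereal (v (coeff h j))" for j
  have finP: "finite P" unfolding P_def by (rule np_points_finite)
  have Pchar: "x \<in> P \<longleftrightarrow> (\<exists>i. x = np_point v h i \<and> coeff h i \<noteq> 0)" for x
    unfolding P_def np_points_def by auto
  have ge: "W m h j \<ge> ereal (m * d)" for j using Q unfolding Qm_def d_def by blast
  have Wy: "coeff h j \<noteq> 0 \<Longrightarrow> W m h j = ereal (m * j + y j)" for j
    using W_np[of h j m] unfolding inner_np y_def by simp
  have A: "coeff h j \<noteq> 0 \<Longrightarrow> m * j + y j \<ge> m * d" for j using ge[of j] Wy[of j] by simp
  have A2: "coeff h j \<noteq> 0 \<Longrightarrow> m * j + y j = m * d \<Longrightarrow> j = 0 \<or> j = d" for j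
    using J[of j] Wy[of j] unfolding d_def by simp
  have jd: "coeff h j \<noteq> 0 \<Longrightarrow> j \<le> d" for j unfolding d_def by (rule le_degree)
  have W0: "W m h 0 = ereal (m * d)" using Q unfolding Qm_def d_def by blast
  have nz0: "coeff h 0 \<noteq> 0" using W0 by (rule W_fin_nz)
  have lc: "coeff h d = 1" using Q unfolding Qm_def d_def by blast
  have nzd: "coeff h d \<noteq> 0" using lc by simp
  have y0: "y 0 = m * d" using Wy[OF nz0] W0 by simp
  have yd: "y d = 0" unfolding y_def lc by simp
  define P0 where "P0 = np_point v h 0"
  define Pd where "Pd = np_point v h d"
  have P0P: "P0 \<in> P" unfolding P0_def using Pchar[of "np_point v h 0"] nz0 by blast
  have PdP: "Pd \<in> P" unfolding Pd_def using Pchar[of "np_point v h d"] nzd by blast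
  have P0d: "P0 \<noteq> Pd" unfolding P0_def Pd_def using d1 np_point_inj unfolding d_def by fastforce
  obtain u where u: "snd u > 0" and Sdef: "S = {x \<in> H. \<forall>y \<in> H. inner u x \<le> inner u y}"
    and aff: "aff_dim S = 1"
    using le unfolding lower_edge_def newton_polygon_def H_def P_def by blast
  obtain u1 u2 where u12: "u = (u1, u2)" by (cases u)
  have u2: "u2 > 0" using u u12 by simp
  have inu: "inner u (np_point v h j) = u1 * j + u2 * y j" for j unfolding u12 inner_np y_def by simp
  have iP0: "inner u P0 = u2 * (m * d)" unfolding P0_def inu y0 by simp
  have iPd: "inner u Pd = u1 * d" unfolding Pd_def inu yd by simp
  show "card (S \<inter> np_points v h) = 2 \<and>
        (\<forall>s s'. s' < s \<and> coeff h s \<noteq> 0 \<and> coeff h s' \<noteq> 0 \<and>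
           np_point v h s extreme_point_of S \<and> np_point v h s' extreme_point_of S \<longrightarrow>
           \<not> p dvd (s - s'))"
  proof (cases "u1 = m * u2")
    case eq: True
    have inu2: "inner u (np_point v h j) = u2 * (m * j + y j)" for j unfolding inu eq by (simp add: algebra_simps)
    define c where "c = u2 * (m * d)"
    have Pge: "inner u x \<ge> c" if xP: "x \<in> P" for x
    proof -
      obtain j where j: "x = np_point v h j" "coeff h j \<noteq> 0" using Pchar[THEN iffD1, OF xP] by blast
      show ?thesis unfolding j(1) inu2 c_def using A[OF j(2)] u2 by (simp add: mult_left_mono)
    qed
    have Peq: "inner u (np_point v h j) = c \<longleftrightarrow> j = 0 \<or> j = d" if nz: "coeff h j \<noteq> 0" for j
    proof
      assume "inner u (np_point v h j) = c"
      then have "m * j + y j = m * d" unfolding inu2 c_def using u2 by simp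
      then show "j = 0 \<or> j = d" using A2[OF nz] by simp
    next
      assume "j = 0 \<or> j = d"
      then show "inner u (np_point v h j) = c" using iP0 iPd eq unfolding c_def P0_def Pd_def
        by (auto simp: algebra_simps)
    qed
    have Hge: "inner u x \<ge> c" if "x \<in> H" for x
      by (rule hull_ge[where P=P]) (use Pge that in \<open>auto simp: H_def\<close>)
    have P0H: "P0 \<in> H" unfolding H_def using P0P by (simp add: hull_inc)
    have iP0c: "inner u P0 = c" unfolding iP0 c_def ..
    have SinP: "x \<in> S \<longleftrightarrow> inner u x = c" if xP: "x \<in> P" for x
    proof -
      have xH: "x \<in> H" unfolding H_def using xP by (simp add: hull_inc)
      show ?thesis
      proof
        assume "x \<in> S"
        then have "inner u x \<le> inner u P0" using P0H unfolding Sdef by blast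
        then show "inner u x = c" using Pge[OF xP] iP0c by simp
      next
        assume "inner u x = c"
        then show "x \<in> S" unfolding Sdef using xH Hge by auto
      qed
    qed
    have SP: "S \<inter> P = {P0, Pd}"
    proof (intro set_eqI iffI)
      fix x assume x: "x \<in> S \<inter> P"
      then have xP: "x \<in> P" by simp
      obtain j where j: "x = np_point v h j" "coeff h j \<noteq> 0" using Pchar[THEN iffD1, OF xP] by blast
      have "inner u x = c" using x SinP[OF xP] by simp
      then have "j = 0 \<or> j = d" using Peq[OF j(2)] j(1) by simp
      then show "x \<in> {P0, Pd}" unfolding P0_def Pd_def j(1) by auto
    next
      fix x assume "x \<in> {P0, Pd}"
      then have "x \<in> P" "inner u x = c" using P0P PdP iP0c Peq[OF nzd] unfolding Pd_def by auto
      then show "x \<in> S \<inter> P" using SinP by simp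
    qed
    show ?thesis
    proof (intro conjI allI impI)
      show "card (S \<inter> np_points v h) = 2" using SP P0d unfolding P_def by simp
      fix s s' assume a: "s' < s \<and> coeff h s \<noteq> 0 \<and> coeff h s' \<noteq> 0 \<and>
           np_point v h s extreme_point_of S \<and> np_point v h s' extreme_point_of S"
      have "np_point v h s \<in> S" "np_point v h s' \<in> S" using a unfolding extreme_point_of_def by auto
      moreover have "np_point v h s \<in> P" "np_point v h s' \<in> P"
        using a Pchar[of "np_point v h s"] Pchar[of "np_point v h s'"] by blast+
      ultimately have "np_point v h s \<in> {P0, Pd}" "np_point v h s' \<in> {P0, Pd}" using SP by blast+
      then have "s = 0 \<or> s = d" "s' = 0 \<or> s' = d" unfolding P0_def Pd_def using np_point_inj by blast+
      then have "s = d" "s' = 0" using a by auto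
      then show "\<not> p dvd (s - s')" using pd unfolding d_def by simp
    qed
  next
    case neq: False
    have False
    proof (cases "u1 > m * u2")
      case True
      have "S \<subseteq> {P0}"
      proof
        fix x assume xS: "x \<in> S"
        have "x = P0"
        proof (rule face_unique[OF finP P0P])
          fix q assume qP: "q \<in> P" "q \<noteq> P0"
          obtain j where j: "q = np_point v h j" "coeff h j \<noteq> 0" using Pchar[THEN iffD1, OF qP(1)] by blast
          have "j \<noteq> 0" using qP(2) j(1) unfolding P0_def by (metis)
          then have "(u1 - m * u2) * j > 0" using True by simp
          moreover have "u2 * y j \<ge> u2 * (m * d - m * j)" using A[OF j(2)] u2 by (simp add: mult_left_mono)
          ultimately show "inner u q > inner u P0" unfolding j(1) inu iP0 by (simp add: algebra_simps)
        next
          show "x \<in> convex hull P" using xS unfolding Sdef H_def by blast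
          show "\<forall>y\<in>convex hull P. inner u x \<le> inner u y" using xS unfolding Sdef H_def by blast
        qed
        then show "x \<in> {P0}" by simp
      qed
      then show False using aff aff_dim_sub_sing by blast
    next
      case False
      then have lt: "u1 < m * u2" using neq by simp
      have "S \<subseteq> {Pd}"
      proof
        fix x assume xS: "x \<in> S"
        have "x = Pd"
        proof (rule face_unique[OF finP PdP])
          fix q assume qP: "q \<in> P" "q \<noteq> Pd"
          obtain j where j: "q = np_point v h j" "coeff h j \<noteq> 0" using Pchar[THEN iffD1, OF qP(1)] by blast
          have "j \<noteq> d" using qP(2) j(1) unfolding Pd_def by (metis)
          then have "j < d" using jd[OF j(2)] by simp
          then have "(m * u2 - u1) * (real d - real j) > 0" using lt by simp
          moreover have "u2 * y j \<ge> u2 * (m * d - m * j)" using A[OF j(2)] u2 by (simp add: mult_left_mono)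
          ultimately show "inner u q > inner u Pd" unfolding j(1) inu iPd by (simp add: algebra_simps)
        next
          show "x \<in> convex hull P" using xS unfolding Sdef H_def by blast
          show "\<forall>y\<in>convex hull P. inner u x \<le> inner u y" using xS unfolding Sdef H_def by blast
        qed
        then show "x \<in> {Pd}" by simp
      qed
      then show False using aff aff_dim_sub_sing by blast
    qed
    then show ?thesis ..
  qed
qed

end


lemma lin0_pow: "([:-0, 1:] :: 'a::field poly) ^ k = monom 1 k"
proof -
  have "([:-0, 1:] :: 'a poly) = monom 1 1" by (simp add: monom_Suc)
  then show ?thesis by (simp add: monom_power)
qed

theorem theorem2p4:
  fixes K :: "'a::field set" and v :: "'a \<Rightarrow> ereal" and \<pi> :: 'a
    and p q :: nat and f :: "'a poly"
  assumes "algebraically_closed_field TYPE('a)"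
    and "is_subfield K"
    and "algebraic_over K"
    and "nonarch_valuation v"
    and "discrete_on_with_uniformizer v K \<pi>"
    and "complete_wrt v K"
    and "finite (residue_field v K \<pi>)"
    and "card (residue_field v K \<pi>) = q"
    and "prime p"
    and "(of_nat p :: 'a, 0) \<in> residue_rel v K \<pi>"
    and "\<forall>i. coeff f i \<in> K"
    and "lead_coeff f = 1"
    and "degree f \<ge> 1"
    and "regular_poly v p f"
  shows "\<forall>m. (\<exists>\<zeta>. poly f \<zeta> = 0 \<and> v \<zeta> = m) \<longrightarrow> regular_poly v p (val_factor v f m)"
proof (intro allI impI)
  fix m assume "\<exists>\<zeta>. poly f \<zeta> = 0 \<and> v \<zeta> = m"
  then obtain z0 where z0: "poly f z0 = 0" "v z0 = m" by blast
  interpret nav v by unfold_locales (rule assms(4))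
  have f0: "f \<noteq> 0" using assms(12) by auto
  have finR: "finite {\<zeta>. poly f \<zeta> = 0}" using f0 by (rule poly_roots_finite)
  show "regular_poly v p (val_factor v f m)"
  proof (cases m)
    case PInf
    then have "z0 = 0" using z0 v_inf_iff by simp
    have Aeq: "{\<zeta>. poly f \<zeta> = 0 \<and> v \<zeta> = m} = {0}" using PInf z0 \<open>z0 = 0\<close> v_inf_iff by auto
    define h where "h = val_factor v f m"
    have h: "h = monom 1 (order 0 f)" unfolding h_def val_factor_def Aeq using lin0_pow[of "order 0 f", where 'a='a] by simp
    have "np_points v h \<subseteq> {np_point v h (order 0 f)}" unfolding np_points_def h
      by (auto split: if_splits)
    then have NP: "newton_polygon v h \<subseteq> {np_point v h (order 0 f)}" unfolding newton_polygon_def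
      by (metis convex_hull_singleton hull_mono)
    show ?thesis unfolding h_def[symmetric] regular_poly_def
    proof (intro allI impI)
      fix S assume "lower_edge v h S"
      then have "S \<subseteq> newton_polygon v h" "aff_dim S = 1" unfolding lower_edge_def by auto
      then show "card (S \<inter> np_points v h) = 2 \<and>
        (\<forall>s s'. s' < s \<and> coeff h s \<noteq> 0 \<and> coeff h s' \<noteq> 0 \<and>
           np_point v h s extreme_point_of S \<and> np_point v h s' extreme_point_of S \<longrightarrow>
           \<not> p dvd (s - s'))" using NP aff_dim_sub_sing by blast
    qed
  next
    case MInf
    then show ?thesis using z0 v_not_minf by simp
  next
    case (real m')
    define A where "A = {\<zeta>. poly f \<zeta> = 0 \<and> v \<zeta> = ereal m'}"
    have finA: "finite A" unfolding A_def by (rule finite_subset[OF _ finR]) auto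
    define fm where "fm = (\<Prod>z\<in>A. [:-z, 1:] ^ order z f)"
    have fmdef: "val_factor v f m = fm" unfolding val_factor_def fm_def A_def real ..
    have Qfm: "Qm m' fm" unfolding fm_def
      by (rule Qm_prod[OF finA], rule Qm_power, rule Qm_lin) (simp add: A_def)
    have "fm dvd f" unfolding fm_def by (rule prod_lin_dvd[OF f0 finA])
    then obtain g where fg: "f = fm * g" by (rule dvdE)
    have g0: "g \<noteq> 0" using fg f0 by auto
    have groots: "v z \<noteq> ereal m'" if "poly g z = 0" for z
    proof
      assume vz: "v z = ereal m'"
      have "poly f z = 0" using fg that by simp
      then have "z \<in> A" unfolding A_def using vz by simp
      then have "poly g z \<noteq> 0" using cofactor_roots[OF f0 finA _ \<open>poly f z = 0\<close>] fg unfolding fm_def by blast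
      then show False using that by simp
    qed
    obtain k0 \<mu>g where um: "umin m' g k0 \<mu>g" using umin_exists[OF assms(1) g0 groots] by blast
    define d where "d = degree fm"
    have z0A: "z0 \<in> A" unfolding A_def using z0 real by simp
    have "order z0 f > 0" using z0 f0 by (simp add: order_gt_0_iff)
    then have "poly fm z0 = 0" unfolding fm_def poly_prod using finA z0A
      by (auto simp: prod_zero_iff)
    moreover have lc: "lead_coeff fm = 1" using Qfm unfolding Qm_def by blast
    ultimately have d1: "d \<ge> 1" unfolding d_def
    proof -
      assume pz: "poly fm z0 = 0" and l1: "lead_coeff fm = 1"
      show "degree fm \<ge> 1"
      proof (rule ccontr)
        assume "\<not> degree fm \<ge> 1"
        then have "degree fm = 0" by simp
        then have "fm = [:1:]" using l1 by (metis degree_eq_zeroE lead_coeff_pCons(2) pCons_0_0)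
        then show False using pz by simp
      qed
    qed
    have geh: "\<And>j. W m' fm j \<ge> ereal (m' * d)" using Qfm unfolding Qm_def d_def by blast
    have gg: "\<And>l. W m' g l \<ge> ereal \<mu>g" "\<And>l. l \<noteq> k0 \<Longrightarrow> W m' g l > ereal \<mu>g" "W m' g k0 = ereal \<mu>g"
      using um unfolding umin_def by auto
    have Wf: "W m' f i = ereal (m' * d + \<mu>g) \<longleftrightarrow> k0 \<le> i \<and> W m' fm (i - k0) = ereal (m' * d)" for i
      unfolding fg by (rule prod_unique[OF geh gg])
    have Wfge: "W m' f i \<ge> ereal (m' * d + \<mu>g)" for i unfolding fg by (rule prod_bound[OF geh gg(1)])
    have Wfm0: "W m' fm 0 = ereal (m' * d)" using Qfm unfolding Qm_def d_def by blast
    have Wfmd: "W m' fm d = ereal (m' * d)" using lc unfolding W_def d_def by simp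
    have E1: "W m' f k0 = ereal (m' * d + \<mu>g)" "W m' f (k0 + d) = ereal (m' * d + \<mu>g)"
      using Wf Wfm0 Wfmd by auto
    have E2: "k0 \<le> i \<and> i \<le> k0 + d" if "W m' f i = ereal (m' * d + \<mu>g)" for i
    proof -
      have "k0 \<le> i" "W m' fm (i - k0) = ereal (m' * d)" using Wf that by auto
      then have "coeff fm (i - k0) \<noteq> 0" using W_fin_nz by blast
      then have "i - k0 \<le> d" unfolding d_def by (rule le_degree)
      then show ?thesis using \<open>k0 \<le> i\<close> by simp
    qed
    have EF: "{i. W m' f i = ereal (m' * d + \<mu>g)} = {k0, k0+d} \<and> \<not> p dvd d"
      by (rule edgeF[OF assms(14) Wfge E1 E2 d1])
    have J: "j = 0 \<or> j = degree fm" if "W m' fm j = ereal (m' * degree fm)" for j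
    proof -
      have "W m' f (k0 + j) = ereal (m' * d + \<mu>g)" using Wf that unfolding d_def by simp
      then have "k0 + j \<in> {k0, k0+d}" using EF by blast
      then show ?thesis unfolding d_def by auto
    qed
    show ?thesis unfolding fmdef
      by (rule regH[OF Qfm _ J]) (use d1 EF in \<open>auto simp: d_def\<close>)
  qed
qed

end
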